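(* Let $l:\mathbb{Z}^2\to\mathcal{L}^4_0$ be a principal contact element net with one family of spherical parameter lines $\{l_{i,j}\}_{i\in\mathbb{Z}}$. Then for any $j_0,j_1\in\mathbb{Z}$ there is a projective transformation $f_{j_0,j_1}:\bigvee_i l_{i,j_0}\to\bigvee_i l_{i,j_1}$ such that $f_{j_0,j_1}(l_{i,j_0})=l_{i,j_1}$ for all $i\in\mathbb{Z}$.
   Context: Let $e_1,\dots,e_6$ be an orthonormal basis of $\mathbb{R}^{4,2}$ with $\langle e_i,e_i\rangle=1$ for $i\le4$ and $\langle e_5,e_5\rangle=\langle e_6,e_6\rangle=-1$. The Lie quadric is $\mathcal{L}^4=\{[x]\in\mathbb{R}\mathrm{P}^5:\langle x,x\rangle=0\}$ and $\mathcal{L}^4_0$ the set of lines contained in $\mathcal{L}^4$. A principal contact element net is a map $l:\mathbb{Z}^2\to\mathcal{L}^4_0$ such that neighbouring lines ($l_{i,j},l_{i+1,j}$ and $l_{i,j},l_{i,j+1}$) intersect. $\bigvee$ denotes projective span. The net has one family of spherical parameter lines $\{l_{i,j}\}_{i\in\mathbb{Z}}$ if for every $j$ the span $\bigvee_i l_{i,j}$ is $4$-dimensional and the planes $\{l_{i,j}\vee l_{i,j+1}\}_{i\in\mathbb{Z}}$ are concurrent (have a common point). Standing assumption: all data are generic (in general position subject to the stated constraints). *)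

theory Defs
  imports "HOL-Analysis.Analysis"
begin

text \<open>Points of RP^5 are represented by nonzero vectors of real^6 (type 6, indices 1..6);
  projective subspaces of projective dimension k by linear subspaces of dimension k+1;
  projective span by linear span of the union; projective intersection nonempty iff
  the linear intersection is not the zero subspace.\<close>

definition lie_form :: "real^6 \<Rightarrow> real^6 \<Rightarrow> real" where
  "lie_form x y = x$1*y$1 + x$2*y$2 + x$3*y$3 + x$4*y$4 - x$5*y$5 - x$6*y$6"

text \<open>An element of L^4_0: a projective line contained in the Lie quadric.\<close>
definition lie_line :: "(real^6) set \<Rightarrow> bool" where
  "lie_line L \<longleftrightarrow> subspace L \<and> dim L = 2 \<and> (\<forall>x\<in>L. lie_form x x = 0)"

definition principal_contact_element_net :: "(int \<Rightarrow> int \<Rightarrow> (real^6) set) \<Rightarrow> bool" where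
  "principal_contact_element_net l \<longleftrightarrow>
     (\<forall>i j. lie_line (l i j)) \<and>
     (\<forall>i j. l i j \<inter> l (i+1) j \<noteq> {0}) \<and>
     (\<forall>i j. l i j \<inter> l i (j+1) \<noteq> {0})"

definition row_span :: "(int \<Rightarrow> int \<Rightarrow> (real^6) set) \<Rightarrow> int \<Rightarrow> (real^6) set" where
  "row_span l j = span (\<Union>i. l i j)"

definition conn_plane :: "(int \<Rightarrow> int \<Rightarrow> (real^6) set) \<Rightarrow> int \<Rightarrow> int \<Rightarrow> (real^6) set" where
  "conn_plane l i j = span (l i j \<union> l i (j+1))"

definition one_family_spherical :: "(int \<Rightarrow> int \<Rightarrow> (real^6) set) \<Rightarrow> bool" where
  "one_family_spherical l \<longleftrightarrow>
     (\<forall>j. dim (row_span l j) = 5) \<and>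
     (\<forall>j. \<exists>p. p \<noteq> 0 \<and> (\<forall>i. p \<in> conn_plane l i j))"

text \<open>Genericity (standing assumption): no point of concurrency of the planes
  l i j \<or> l i (j+1) lies in the hyperplanes spanned by the j-th or (j+1)-th parameter lines.\<close>
definition generic_spherical_net :: "(int \<Rightarrow> int \<Rightarrow> (real^6) set) \<Rightarrow> bool" where
  "generic_spherical_net l \<longleftrightarrow>
     (\<forall>j p. p \<noteq> 0 \<and> (\<forall>i. p \<in> conn_plane l i j) \<longrightarrow>
        p \<notin> row_span l j \<and> p \<notin> row_span l (j+1))"

definition proj_transformation :: "(real^6 \<Rightarrow> real^6) \<Rightarrow> (real^6) set \<Rightarrow> (real^6) set \<Rightarrow> bool" where
  "proj_transformation f A B \<longleftrightarrow> linear f \<and> inj_on f A \<and> f ` A = B"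

end

theory Submission
  imports Defs
begin

lemma key:
  fixes A B :: "(real^6) set" and p :: "real^6"
  assumes sA: "subspace A" and sB: "subspace B" and dA: "dim A = 5" and dB: "dim B = 5"
    and pA: "p \<notin> A" and pB: "p \<notin> B"
  shows "\<exists>f. proj_transformation f A B \<and> (\<forall>La Lb. subspace La \<and> subspace Lb \<and> dim La = 2 \<and> dim Lb = 2
    \<and> La \<subseteq> A \<and> Lb \<subseteq> B \<and> p \<in> span (La \<union> Lb) \<and> La \<inter> Lb \<noteq> {0} \<longrightarrow> f ` La = Lb)"
proof -
  have "dim B = DIM(real^6) - 1" using dB by simp
  then obtain a where a: "a \<noteq> 0" "span B = {x. a \<bullet> x = 0}" using dim_eq_hyperplane by blast
  have Beq: "B = {x. a \<bullet> x = 0}" using a sB span_eq_iff by blast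
  have ap: "a \<bullet> p \<noteq> 0" using pB Beq by auto
  define f where "f x = x - ((a \<bullet> x) / (a \<bullet> p)) *\<^sub>R p" for x
  have lin: "linear f" unfolding f_def linear_iff
    by (auto simp: inner_add_right inner_scaleR_right algebra_simps add_divide_distrib)
  have fB: "f x \<in> B" for x using ap unfolding Beq f_def by (simp add: inner_diff_right)
  have f0: "x = 0" if "x \<in> A" "f x = 0" for x
  proof (rule ccontr)
    assume "x \<noteq> 0"
    with that have c: "(a \<bullet> x) / (a \<bullet> p) \<noteq> 0" and e: "x = ((a \<bullet> x) / (a \<bullet> p)) *\<^sub>R p"
      unfolding f_def by auto
    then have "inverse ((a \<bullet> x) / (a \<bullet> p)) *\<^sub>R x = p"
      by (metis (no_types) scaleR_scaleR left_inverse scaleR_one)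
    then have "p \<in> A" using that(1) sA by (metis subspace_scale)
    with pA show False by simp
  qed
  have injA: "inj_on f A"
  proof (rule inj_onI)
    fix x y assume "x \<in> A" "y \<in> A" "f x = f y"
    then have "x - y \<in> A" "f (x - y) = 0" using sA lin by (auto simp: subspace_diff linear_diff)
    then show "x = y" using f0 by (metis eq_iff_diff_eq_0)
  qed
  have spA: "span A = A" using sA by (simp add: span_eq_iff)
  have "f ` A = B"
  proof (rule subspace_dim_equal)
    show "subspace (f ` A)" using sA lin by (simp add: linear_subspace_image)
    show "f ` A \<subseteq> B" using fB by auto
    show "subspace B" by fact
    have "dim (f ` A) = dim A" using lin injA spA by (metis dim_image_eq)
    then show "dim B \<le> dim (f ` A)" using dA dB by simp
  qed
  then have pt: "proj_transformation f A B" using lin injA by (simp add: proj_transformation_def)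
  have "\<forall>La Lb. subspace La \<and> subspace Lb \<and> dim La = 2 \<and> dim Lb = 2
    \<and> La \<subseteq> A \<and> Lb \<subseteq> B \<and> p \<in> span (La \<union> Lb) \<and> La \<inter> Lb \<noteq> {0} \<longrightarrow> f ` La = Lb"
  proof (intro allI impI)
  fix La Lb assume H: "subspace La \<and> subspace Lb \<and> dim La = 2 \<and> dim Lb = 2
    \<and> La \<subseteq> A \<and> Lb \<subseteq> B \<and> p \<in> span (La \<union> Lb) \<and> La \<inter> Lb \<noteq> {0}"
  then have sLa: "subspace La" and sLb: "subspace Lb" and dLa: "dim La = 2" and dLb: "dim Lb = 2"
    and LaA: "La \<subseteq> A" and LbB: "Lb \<subseteq> B"
    and pC: "p \<in> span (La \<union> Lb)" and int: "La \<inter> Lb \<noteq> {0}" by auto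
  define C where "C = span (La \<union> Lb)"
  have sC: "subspace C" unfolding C_def by simp
  have Csum: "C = {x + y |x y. x \<in> La \<and> y \<in> Lb}"
  proof -
    have e1: "span La = La" and e2: "span Lb = Lb" using sLa sLb by (simp_all add: span_eq_iff)
    show ?thesis unfolding C_def span_Un e1 e2 by (rule refl)
  qed
  have "dim C + dim (La \<inter> Lb) = 4" using dim_sums_Int[OF sLa sLb] Csum dLa dLb by simp
  moreover have "dim (La \<inter> Lb) \<noteq> 0"
  proof
    assume "dim (La \<inter> Lb) = 0"
    then have "La \<inter> Lb \<subseteq> {0}" by simp
    moreover have "0 \<in> La \<inter> Lb" using sLa sLb by (simp add: subspace_0)
    ultimately show False using int by blast
  qed
  ultimately have dC: "dim C \<le> 3" by linarith
  have "C \<inter> B \<subset> C" using pC pB unfolding C_def by auto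
  moreover have "subspace (C \<inter> B)" using sC sB by (simp add: subspace_inter)
  ultimately have "span (C \<inter> B) \<subset> span C" using sC by (metis span_eq_iff)
  then have "dim (C \<inter> B) < dim C" by (rule dim_psubset)
  with dC have dCB: "dim (C \<inter> B) \<le> 2" by simp
  have LbC: "Lb \<subseteq> C" unfolding C_def by (meson span_superset le_supI2 order_trans sup_ge2)
  have CB: "Lb = C \<inter> B"
    by (rule subspace_dim_equal) (use sLb sC sB LbC LbB dCB dLb in \<open>auto simp: subspace_inter\<close>)
  show "f ` La = Lb"
  proof (rule subspace_dim_equal)
    show "subspace (f ` La)" using sLa lin by (simp add: linear_subspace_image)
    show "subspace Lb" by fact
    have "f x \<in> C" if "x \<in> La" for x
    proof -
      have "x \<in> C" using that unfolding C_def by (simp add: span_base)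
      moreover have "p \<in> C" using pC C_def by simp
      ultimately show ?thesis unfolding f_def using sC by (simp add: subspace_diff subspace_scale)
    qed
    then show "f ` La \<subseteq> Lb" using CB fB by auto
    have "inj_on f La" using injA LaA inj_on_subset by blast
    moreover have "span La = La" using sLa by (simp add: span_eq_iff)
    ultimately have "dim (f ` La) = dim La" using lin by (metis dim_image_eq)
    then show "dim Lb \<le> dim (f ` La)" using dLa dLb by simp
  qed
  qed
  with pt show ?thesis by blast
qed


definition rel :: "(int \<Rightarrow> int \<Rightarrow> (real^6) set) \<Rightarrow> int \<Rightarrow> int \<Rightarrow> bool" where
  "rel l j0 j1 \<longleftrightarrow> (\<exists>f. proj_transformation f (row_span l j0) (row_span l j1) \<and>
           (\<forall>i. f ` (l i j0) = l i j1))"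

lemma rel_refl: "rel l j j"
  unfolding rel_def proj_transformation_def by (rule exI[of _ "\<lambda>x. x"]) (auto simp: linear_iff)

lemma rel_trans:
  assumes "rel l a b" "rel l b c" shows "rel l a c"
proof -
  obtain f where f: "proj_transformation f (row_span l a) (row_span l b)" "\<forall>i. f ` (l i a) = l i b"
    using assms(1) unfolding rel_def by blast
  obtain g where g: "proj_transformation g (row_span l b) (row_span l c)" "\<forall>i. g ` (l i b) = l i c"
    using assms(2) unfolding rel_def by blast
  have "proj_transformation (g \<circ> f) (row_span l a) (row_span l c)"
    using f(1) g(1) unfolding proj_transformation_def image_comp[symmetric]
    by (simp add: linear_compose comp_inj_on)
  moreover have "\<forall>i. (g \<circ> f) ` (l i a) = l i c" unfolding image_comp[symmetric] using f(2) g(2) by simp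
  ultimately show ?thesis unfolding rel_def by blast
qed

lemma rel_step:
  assumes net: "principal_contact_element_net l"
    and sph: "one_family_spherical l"
    and gen: "generic_spherical_net l"
  shows "rel l j (j+1) \<and> rel l (j+1) j"
proof -
  obtain p where p: "p \<noteq> 0" "\<forall>i. p \<in> conn_plane l i j" using sph unfolding one_family_spherical_def by blast
  then have pn: "p \<notin> row_span l j" "p \<notin> row_span l (j+1)" using gen unfolding generic_spherical_net_def by blast+
  have sl: "subspace (l i k)" "dim (l i k) = 2" for i k using net
    unfolding principal_contact_element_net_def lie_line_def by auto
  have int: "l i j \<inter> l i (j+1) \<noteq> {0}" for i using net unfolding principal_contact_element_net_def by auto
  have sr: "subspace (row_span l k)" "dim (row_span l k) = 5" for k
    using sph unfolding one_family_spherical_def row_span_def by auto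
  have sub: "l i k \<subseteq> row_span l k" for i k unfolding row_span_def
    using span_superset[of "\<Union>i. l i k"] by blast
  have pc: "p \<in> span (l i j \<union> l i (j+1))" "p \<in> span (l i (j+1) \<union> l i j)" for i
    using p(2) unfolding conn_plane_def by (auto simp: Un_commute)
  obtain f where f: "proj_transformation f (row_span l j) (row_span l (j+1))"
    "\<forall>La Lb. subspace La \<and> subspace Lb \<and> dim La = 2 \<and> dim Lb = 2
    \<and> La \<subseteq> row_span l j \<and> Lb \<subseteq> row_span l (j+1) \<and> p \<in> span (La \<union> Lb) \<and> La \<inter> Lb \<noteq> {0} \<longrightarrow> f ` La = Lb"
    using key[OF sr(1) sr(1) sr(2) sr(2) pn] by blast
  have "f ` l i j = l i (j+1)" for i by (rule f(2)[rule_format]) (simp add: sl sub pc int)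
  with f(1) have 1: "rel l j (j+1)" unfolding rel_def by blast
  obtain g where g: "proj_transformation g (row_span l (j+1)) (row_span l j)"
    "\<forall>La Lb. subspace La \<and> subspace Lb \<and> dim La = 2 \<and> dim Lb = 2
    \<and> La \<subseteq> row_span l (j+1) \<and> Lb \<subseteq> row_span l j \<and> p \<in> span (La \<union> Lb) \<and> La \<inter> Lb \<noteq> {0} \<longrightarrow> g ` La = Lb"
    using key[OF sr(1) sr(1) sr(2) sr(2) pn(2) pn(1)] by blast
  have int2: "l i (j+1) \<inter> l i j \<noteq> {0}" for i using int[of i] by (simp add: Int_commute)
  have "g ` l i (j+1) = l i j" for i by (rule g(2)[rule_format]) (simp add: sl sub pc int2)
  with g(1) have 2: "rel l (j+1) j" unfolding rel_def by blast
  from 1 2 show ?thesis by simp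
qed

theorem proposition5p5:
  fixes l :: "int \<Rightarrow> int \<Rightarrow> (real^6) set"
  assumes "principal_contact_element_net l"
    and "one_family_spherical l"
    and "generic_spherical_net l"
  shows "\<forall>j0 j1. \<exists>f. proj_transformation f (row_span l j0) (row_span l j1) \<and>
           (\<forall>i. f ` (l i j0) = l i j1)"
proof (intro allI)
  fix j0 j1 :: int
  have st: "rel l j (j+1)" "rel l (j+1) j" for j using rel_step[OF assms] by auto
  have "rel l j0 j1"
  proof (induct j1 rule: int_induct[where k=j0])
    case base show ?case by (rule rel_refl)
  next
    case (step1 i) then show ?case using st(1)[of i] rel_trans by blast
  next
    case (step2 i)
    have "rel l i (i-1)" using st(2)[of "i-1"] by simp
    with step2 show ?case using rel_trans by blast
  qed
  then show "\<exists>f. proj_transformation f (row_span l j0) (row_span l j1) \<and>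
           (\<forall>i. f ` (l i j0) = l i j1)" unfolding rel_def .
qed

end
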